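(* Let $h(t)=\sqrt{1+\frac1t}$ and $H(t)=h(t)+\frac{1}{h(t)}$ for $t\in(0,\infty)$. Then for every integer $i\ge1$ and $t>0$, \[ h^{(i)}(t)=\frac{(-1)^i}{2^i t^{i+1}(1+t)^{i-1}h(t)}\sum_{k=0}^{i-1}a_{i,k}t^k,\qquad \Bigl[\frac{1}{h(t)}\Bigr]^{(i)}=\frac{(-1)^{i+1}}{2^i t^{i}(1+t)^{i}h(t)}\sum_{k=0}^{i-1}b_{i,k}t^k, \] \[ H^{(i)}(t)=\frac{(-1)^i}{2^i t^{i+1}(1+t)^{i}h(t)}\sum_{k=0}^{i-1}c_{i,k}t^k, \] where \[ a_{i,k}=\frac{(i-1)!\,i!\,(2i-2k-1)!!}{(i-k-1)!\,(i-k)!\,k!}2^k,\quad b_{i,k}=\frac{(i-1)!\,i!\,(2i-2k-3)!!}{(i-k-1)!\,(i-k)!\,k!}2^k,\quad c_{i,k}=\frac{(i-1)!\,(i+1)!\,(2i-2k-1)!!}{(i-k-1)!\,(i-k+1)!\,k!}2^k. \] Consequently, $h$ and $H$ are completely monotonic on $(0,\infty)$, and $\frac1h$ is a Bernstein function on $(0,\infty)$.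
   Context: Double factorials: $(2m-1)!!=1\cdot3\cdots(2m-1)$ for $m\ge1$, with $(-1)!!=1$. A function $f$ on an interval $I\subseteq\mathbb{R}$ is completely monotonic on $I$ if it has derivatives of all orders on $I$ and $(-1)^n f^{(n)}(t)\ge 0$ for all $t\in I$ and all integers $n\ge0$. A function $f:I\to[0,\infty)$ is a Bernstein function on $I$ if it has derivatives of all orders and $f'$ is completely monotonic on $I$. *)

theory Defs
  imports "HOL-Analysis.Analysis"
begin

text \<open>Odd double factorial: odd_dfact m = (2m-1)!! = 1*3*...*(2m-1), with odd_dfact 0 = (-1)!! = 1.\<close>
definition odd_dfact :: "nat \<Rightarrow> nat" where
  "odd_dfact m = (\<Prod>j<m. 2 * j + 1)"

definition completely_monotonic_on :: "real set \<Rightarrow> (real \<Rightarrow> real) \<Rightarrow> bool" where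
  "completely_monotonic_on I f \<longleftrightarrow>
     (\<forall>n. \<forall>t\<in>I. (deriv ^^ n) f differentiable (at t)) \<and>
     (\<forall>n. \<forall>t\<in>I. (-1) ^ n * (deriv ^^ n) f t \<ge> 0)"

definition bernstein_on :: "real set \<Rightarrow> (real \<Rightarrow> real) \<Rightarrow> bool" where
  "bernstein_on I f \<longleftrightarrow>
     (\<forall>t\<in>I. f t \<ge> 0) \<and>
     (\<forall>n. \<forall>t\<in>I. (deriv ^^ n) f differentiable (at t)) \<and>
     completely_monotonic_on I (deriv f)"

text \<open>Coefficients a_{i,k}, b_{i,k}, c_{i,k} (for 0 \<le> k \<le> i-1).
  (2i-2k-1)!! = odd_dfact (i-k), (2i-2k-3)!! = odd_dfact (i-k-1).\<close>
definition coeff_a :: "nat \<Rightarrow> nat \<Rightarrow> real" where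
  "coeff_a i k = fact (i - 1) * fact i * real (odd_dfact (i - k))
                 / (fact (i - k - 1) * fact (i - k) * fact k) * 2 ^ k"

definition coeff_b :: "nat \<Rightarrow> nat \<Rightarrow> real" where
  "coeff_b i k = fact (i - 1) * fact i * real (odd_dfact (i - k - 1))
                 / (fact (i - k - 1) * fact (i - k) * fact k) * 2 ^ k"

definition coeff_c :: "nat \<Rightarrow> nat \<Rightarrow> real" where
  "coeff_c i k = fact (i - 1) * fact (i + 1) * real (odd_dfact (i - k))
                 / (fact (i - k - 1) * fact (i - k + 1) * fact k) * 2 ^ k"

end

theory Submission
  imports Defs
begin


lemma powr_shift: "t > 0 \<Longrightarrow> (t::real) powr a = t * t powr (a - 1)"
  by (simp add: powr_diff)

lemma step_deriv:
  fixes g Q Q' :: "real \<Rightarrow> real"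
  assumes eq: "\<And>u. u > 0 \<Longrightarrow> g u = s * Q u * u powr a * (1+u) powr b"
    and dQ: "\<And>u. u > 0 \<Longrightarrow> (Q has_real_derivative Q' u) (at u)"
    and t: "t > 0"
  shows "(g has_real_derivative s * (Q' t * t * (1+t) + Q t * (a*(1+t) + b*t)) * t powr (a-1) * (1+t) powr (b-1)) (at t)"
proof -
  have d: "((\<lambda>u. s * Q u * u powr a * (1+u) powr b) has_real_derivative
     s * Q' t * t powr a * (1+t) powr b + s * Q t * (a * t powr (a-1)) * (1+t) powr b
      + s * Q t * t powr a * (b * (1+t) powr (b-1))) (at t)"
    using t dQ[OF t] by (auto intro!: derivative_eq_intros simp: algebra_simps)
  have e: "s * Q' t * t powr a * (1+t) powr b + s * Q t * (a * t powr (a-1)) * (1+t) powr b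
      + s * Q t * t powr a * (b * (1+t) powr (b-1)) =
      s * (Q' t * t * (1+t) + Q t * (a*(1+t) + b*t)) * t powr (a-1) * (1+t) powr (b-1)"
    using powr_shift[OF t, of a] powr_shift[of "1+t" b] t
    by (simp add: algebra_simps)
  show ?thesis
    apply (rule has_field_derivative_transform_within_open[where S="{0<..}"])
    using d e t eq by auto
qed

lemma family:
  fixes f :: "real \<Rightarrow> real" and R R' :: "nat \<Rightarrow> real \<Rightarrow> real" and s A B :: "nat \<Rightarrow> real"
  assumes base: "\<And>t. t > 0 \<Longrightarrow> f t = s 0 * R 0 t * t powr A 0 * (1+t) powr B 0"
    and dR: "\<And>i t. t > 0 \<Longrightarrow> (R i has_real_derivative R' i t) (at t)"
    and rec: "\<And>i t. t > 0 \<Longrightarrow> s i * (R' i t * t * (1+t) + R i t * (A i * (1+t) + B i * t))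
                   = s (Suc i) * R (Suc i) t"
    and As: "\<And>i. A (Suc i) = A i - 1" and Bs: "\<And>i. B (Suc i) = B i - 1"
  shows "\<forall>t>0. (deriv ^^ i) f t = s i * R i t * t powr A i * (1+t) powr B i"
proof (induction i)
  case 0
  then show ?case using base by simp
next
  case (Suc i)
  show ?case
  proof (intro allI impI)
    fix t :: real assume t: "t > 0"
    have "((deriv ^^ i) f has_real_derivative s (Suc i) * R (Suc i) t * t powr A (Suc i) * (1+t) powr B (Suc i)) (at t)"
      using step_deriv[of "(deriv ^^ i) f" "s i" "R i" "A i" "B i" "R' i" t] Suc.IH dR t rec[OF t, of i] As Bs
      by auto
    then show "(deriv ^^ Suc i) f t = s (Suc i) * R (Suc i) t * t powr A (Suc i) * (1+t) powr B (Suc i)"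
      by (simp add: DERIV_imp_deriv)
  qed
qed

lemma family_diff:
  fixes f :: "real \<Rightarrow> real" and R R' :: "nat \<Rightarrow> real \<Rightarrow> real" and s A B :: "nat \<Rightarrow> real"
  assumes base: "\<And>t. t > 0 \<Longrightarrow> f t = s 0 * R 0 t * t powr A 0 * (1+t) powr B 0"
    and dR: "\<And>i t. t > 0 \<Longrightarrow> (R i has_real_derivative R' i t) (at t)"
    and rec: "\<And>i t. t > 0 \<Longrightarrow> s i * (R' i t * t * (1+t) + R i t * (A i * (1+t) + B i * t))
                   = s (Suc i) * R (Suc i) t"
    and As: "\<And>i. A (Suc i) = A i - 1" and Bs: "\<And>i. B (Suc i) = B i - 1"
    and t: "t > 0"
  shows "(deriv ^^ i) f differentiable (at t)"
proof -
  have "((deriv ^^ i) f has_real_derivative s i * (R' i t * t * (1+t) + R i t * (A i * (1+t) + B i * t)) * t powr (A i - 1) * (1+t) powr (B i - 1)) (at t)"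
    using step_deriv[of "(deriv ^^ i) f" "s i" "R i" "A i" "B i" "R' i" t] family[OF base dR rec As Bs] dR t
    by auto
  then show ?thesis using real_differentiable_def by blast
qed




lemma reindex:
  fixes d p q :: "nat \<Rightarrow> real"
  assumes "d 0 = p 0" "\<And>k. k < n \<Longrightarrow> d (Suc k) = p (Suc k) + q k" "d (Suc n) = q n"
  shows "(\<Sum>k<Suc (Suc n). d k * t^k) = (\<Sum>k<Suc n. p k * t^k + q k * t^(k+1))"
proof -
  have "(\<Sum>k<Suc (Suc n). d k * t^k) = d 0 + (\<Sum>k<n. d (Suc k) * t^(Suc k)) + d (Suc n) * t^(Suc n)"
    apply (subst sum.lessThan_Suc) apply (subst sum.lessThan_Suc_shift) by simp
  also have "(\<Sum>k<n. d (Suc k) * t^(Suc k)) = (\<Sum>k<n. p (Suc k) * t^(Suc k)) + (\<Sum>k<n. q k * t^(Suc k))"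
    using assms(2) by (simp add: sum.distrib[symmetric] algebra_simps)
  also have "(\<Sum>k<Suc n. p k * t^k + q k * t^(k+1)) = (\<Sum>k<Suc n. p k * t^k) + (\<Sum>k<Suc n. q k * t^(k+1))"
    by (simp add: sum.distrib)
  moreover have "(\<Sum>k<Suc n. p k * t^k) = p 0 + (\<Sum>k<n. p (Suc k) * t^(Suc k))"
    by (simp add: sum.lessThan_Suc_shift del: sum.lessThan_Suc)
  ultimately show ?thesis using assms by simp
qed

lemma odd_dfact_Suc: "real (odd_dfact (Suc m)) = (2 * real m + 1) * real (odd_dfact m)"
  by (simp add: odd_dfact_def algebra_simps)

lemma a0: "coeff_a (Suc (Suc n)) 0 = (2 * real (Suc n) + 1) * coeff_a (Suc n) 0"
  unfolding coeff_a_def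
  apply (simp add: odd_dfact_Suc del: fact_Suc)
  done

lemma a_0: "coeff_a (Suc (Suc n)) 0 = (2*real (Suc n)+1-2*real (0)) * coeff_a (Suc n) 0"
proof -
  have e1: "Suc (Suc (Suc (k+j))) - Suc k = Suc (Suc j)" "Suc (Suc (k+j)) - Suc k = Suc j" "Suc (Suc (k+j)) - k = Suc (Suc j)"
     "Suc (Suc n) - Suc n = Suc 0" "Suc n - n = Suc 0" "\<And>x::nat. x + 1 = Suc x"
     by auto
  define F :: real where "F = fact (k+j)"
  define F2 :: real where "F2 = fact n"
  define G :: real where "G = fact j"
  define K :: real where "K = fact k"
  define Dj where "Dj = real (odd_dfact j)"
  define Dn where "Dn = real (odd_dfact n)"
  have pos: "F > 0" "F2 > 0" "G > 0" "K > 0" "Dj > 0" "Dn > 0" unfolding F_def F2_def G_def K_def Dj_def Dn_def odd_dfact_def by (auto intro!: prod_pos)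
  show ?thesis
    unfolding coeff_a_def e1
    apply (simp only: fact_Suc odd_dfact_Suc power_Suc diff_Suc_1 diff_zero fact_0 e1)
    apply (fold F_def F2_def G_def K_def Dj_def Dn_def)
    using pos apply (simp add: divide_simps del: of_nat_Suc)
    apply (simp add: algebra_simps)?
    done
qed

lemma a_mid: "coeff_a (Suc (Suc (Suc (k+j)))) (Suc k) = (2*real (Suc (Suc (k+j)))+1-2*real (Suc k)) * coeff_a (Suc (Suc (k+j))) (Suc k) + (4*real (Suc (Suc (k+j)))-2*real (k)) * coeff_a (Suc (Suc (k+j))) k"
proof -
  have e1: "Suc (Suc (Suc (k+j))) - Suc k = Suc (Suc j)" "Suc (Suc (k+j)) - Suc k = Suc j" "Suc (Suc (k+j)) - k = Suc (Suc j)"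
     "Suc (Suc n) - Suc n = Suc 0" "Suc n - n = Suc 0" "\<And>x::nat. x + 1 = Suc x"
     by auto
  define F :: real where "F = fact (k+j)"
  define F2 :: real where "F2 = fact n"
  define G :: real where "G = fact j"
  define K :: real where "K = fact k"
  define Dj where "Dj = real (odd_dfact j)"
  define Dn where "Dn = real (odd_dfact n)"
  have pos: "F > 0" "F2 > 0" "G > 0" "K > 0" "Dj > 0" "Dn > 0" unfolding F_def F2_def G_def K_def Dj_def Dn_def odd_dfact_def by (auto intro!: prod_pos)
  show ?thesis
    unfolding coeff_a_def e1
    apply (simp only: fact_Suc odd_dfact_Suc power_Suc diff_Suc_1 diff_zero fact_0 e1)
    apply (fold F_def F2_def G_def K_def Dj_def Dn_def)
    using pos apply (simp add: divide_simps del: of_nat_Suc)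
    apply (simp add: algebra_simps)?
    done
qed

lemma a_end: "coeff_a (Suc (Suc n)) (Suc n) = (4*real (Suc n)-2*real (n)) * coeff_a (Suc n) n"
proof -
  have e1: "Suc (Suc (Suc (k+j))) - Suc k = Suc (Suc j)" "Suc (Suc (k+j)) - Suc k = Suc j" "Suc (Suc (k+j)) - k = Suc (Suc j)"
     "Suc (Suc n) - Suc n = Suc 0" "Suc n - n = Suc 0" "\<And>x::nat. x + 1 = Suc x"
     by auto
  define F :: real where "F = fact (k+j)"
  define F2 :: real where "F2 = fact n"
  define G :: real where "G = fact j"
  define K :: real where "K = fact k"
  define Dj where "Dj = real (odd_dfact j)"
  define Dn where "Dn = real (odd_dfact n)"
  have pos: "F > 0" "F2 > 0" "G > 0" "K > 0" "Dj > 0" "Dn > 0" unfolding F_def F2_def G_def K_def Dj_def Dn_def odd_dfact_def by (auto intro!: prod_pos)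
  show ?thesis
    unfolding coeff_a_def e1
    apply (simp only: fact_Suc odd_dfact_Suc power_Suc diff_Suc_1 diff_zero fact_0 e1)
    apply (fold F_def F2_def G_def K_def Dj_def Dn_def)
    using pos apply (simp add: divide_simps del: of_nat_Suc)
    apply (simp add: algebra_simps)?
    done
qed

lemma b_0: "coeff_b (Suc (Suc n)) 0 = (2*real (Suc n)-1-2*real (0)) * coeff_b (Suc n) 0"
proof -
  have e1: "Suc (Suc (Suc (k+j))) - Suc k = Suc (Suc j)" "Suc (Suc (k+j)) - Suc k = Suc j" "Suc (Suc (k+j)) - k = Suc (Suc j)"
     "Suc (Suc n) - Suc n = Suc 0" "Suc n - n = Suc 0" "\<And>x::nat. x + 1 = Suc x"
     by auto
  define F :: real where "F = fact (k+j)"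
  define F2 :: real where "F2 = fact n"
  define G :: real where "G = fact j"
  define K :: real where "K = fact k"
  define Dj where "Dj = real (odd_dfact j)"
  define Dn where "Dn = real (odd_dfact n)"
  have pos: "F > 0" "F2 > 0" "G > 0" "K > 0" "Dj > 0" "Dn > 0" unfolding F_def F2_def G_def K_def Dj_def Dn_def odd_dfact_def by (auto intro!: prod_pos)
  show ?thesis
    unfolding coeff_b_def e1
    apply (simp only: fact_Suc odd_dfact_Suc power_Suc diff_Suc_1 diff_zero fact_0 e1)
    apply (fold F_def F2_def G_def K_def Dj_def Dn_def)
    using pos apply (simp add: divide_simps del: of_nat_Suc)
    apply (simp add: algebra_simps)?
    done
qed

lemma b_mid: "coeff_b (Suc (Suc (Suc (k+j)))) (Suc k) = (2*real (Suc (Suc (k+j)))-1-2*real (Suc k)) * coeff_b (Suc (Suc (k+j))) (Suc k) + (4*real (Suc (Suc (k+j)))-2*real (k)) * coeff_b (Suc (Suc (k+j))) k"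
proof -
  have e1: "Suc (Suc (Suc (k+j))) - Suc k = Suc (Suc j)" "Suc (Suc (k+j)) - Suc k = Suc j" "Suc (Suc (k+j)) - k = Suc (Suc j)"
     "Suc (Suc n) - Suc n = Suc 0" "Suc n - n = Suc 0" "\<And>x::nat. x + 1 = Suc x"
     by auto
  define F :: real where "F = fact (k+j)"
  define F2 :: real where "F2 = fact n"
  define G :: real where "G = fact j"
  define K :: real where "K = fact k"
  define Dj where "Dj = real (odd_dfact j)"
  define Dn where "Dn = real (odd_dfact n)"
  have pos: "F > 0" "F2 > 0" "G > 0" "K > 0" "Dj > 0" "Dn > 0" unfolding F_def F2_def G_def K_def Dj_def Dn_def odd_dfact_def by (auto intro!: prod_pos)
  show ?thesis
    unfolding coeff_b_def e1
    apply (simp only: fact_Suc odd_dfact_Suc power_Suc diff_Suc_1 diff_zero fact_0 e1)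
    apply (fold F_def F2_def G_def K_def Dj_def Dn_def)
    using pos apply (simp add: divide_simps del: of_nat_Suc)
    apply (simp add: algebra_simps)?
    done
qed

lemma b_end: "coeff_b (Suc (Suc n)) (Suc n) = (4*real (Suc n)-2*real (n)) * coeff_b (Suc n) n"
proof -
  have e1: "Suc (Suc (Suc (k+j))) - Suc k = Suc (Suc j)" "Suc (Suc (k+j)) - Suc k = Suc j" "Suc (Suc (k+j)) - k = Suc (Suc j)"
     "Suc (Suc n) - Suc n = Suc 0" "Suc n - n = Suc 0" "\<And>x::nat. x + 1 = Suc x"
     by auto
  define F :: real where "F = fact (k+j)"
  define F2 :: real where "F2 = fact n"
  define G :: real where "G = fact j"
  define K :: real where "K = fact k"
  define Dj where "Dj = real (odd_dfact j)"
  define Dn where "Dn = real (odd_dfact n)"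
  have pos: "F > 0" "F2 > 0" "G > 0" "K > 0" "Dj > 0" "Dn > 0" unfolding F_def F2_def G_def K_def Dj_def Dn_def odd_dfact_def by (auto intro!: prod_pos)
  show ?thesis
    unfolding coeff_b_def e1
    apply (simp only: fact_Suc odd_dfact_Suc power_Suc diff_Suc_1 diff_zero fact_0 e1)
    apply (fold F_def F2_def G_def K_def Dj_def Dn_def)
    using pos apply (simp add: divide_simps del: of_nat_Suc)
    apply (simp add: algebra_simps)?
    done
qed

lemma c_0: "coeff_c (Suc (Suc n)) 0 = (2*real (Suc n)+1-2*real (0)) * coeff_c (Suc n) 0"
proof -
  have e1: "Suc (Suc (Suc (k+j))) - Suc k = Suc (Suc j)" "Suc (Suc (k+j)) - Suc k = Suc j" "Suc (Suc (k+j)) - k = Suc (Suc j)"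
     "Suc (Suc n) - Suc n = Suc 0" "Suc n - n = Suc 0" "\<And>x::nat. x + 1 = Suc x"
     by auto
  define F :: real where "F = fact (k+j)"
  define F2 :: real where "F2 = fact n"
  define G :: real where "G = fact j"
  define K :: real where "K = fact k"
  define Dj where "Dj = real (odd_dfact j)"
  define Dn where "Dn = real (odd_dfact n)"
  have pos: "F > 0" "F2 > 0" "G > 0" "K > 0" "Dj > 0" "Dn > 0" unfolding F_def F2_def G_def K_def Dj_def Dn_def odd_dfact_def by (auto intro!: prod_pos)
  show ?thesis
    unfolding coeff_c_def e1
    apply (simp only: fact_Suc odd_dfact_Suc power_Suc diff_Suc_1 diff_zero fact_0 e1)
    apply (fold F_def F2_def G_def K_def Dj_def Dn_def)
    using pos apply (simp add: divide_simps del: of_nat_Suc)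
    apply (simp add: algebra_simps)?
    done
qed

lemma c_mid: "coeff_c (Suc (Suc (Suc (k+j)))) (Suc k) = (2*real (Suc (Suc (k+j)))+1-2*real (Suc k)) * coeff_c (Suc (Suc (k+j))) (Suc k) + (4*real (Suc (Suc (k+j)))+2-2*real (k)) * coeff_c (Suc (Suc (k+j))) k"
proof -
  have e1: "Suc (Suc (Suc (k+j))) - Suc k = Suc (Suc j)" "Suc (Suc (k+j)) - Suc k = Suc j" "Suc (Suc (k+j)) - k = Suc (Suc j)"
     "Suc (Suc n) - Suc n = Suc 0" "Suc n - n = Suc 0" "\<And>x::nat. x + 1 = Suc x"
     by auto
  define F :: real where "F = fact (k+j)"
  define F2 :: real where "F2 = fact n"
  define G :: real where "G = fact j"
  define K :: real where "K = fact k"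
  define Dj where "Dj = real (odd_dfact j)"
  define Dn where "Dn = real (odd_dfact n)"
  have pos: "F > 0" "F2 > 0" "G > 0" "K > 0" "Dj > 0" "Dn > 0" unfolding F_def F2_def G_def K_def Dj_def Dn_def odd_dfact_def by (auto intro!: prod_pos)
  show ?thesis
    unfolding coeff_c_def e1
    apply (simp only: fact_Suc odd_dfact_Suc power_Suc diff_Suc_1 diff_zero fact_0 e1)
    apply (fold F_def F2_def G_def K_def Dj_def Dn_def)
    using pos apply (simp add: divide_simps del: of_nat_Suc)
    apply (simp add: algebra_simps)?
    done
qed

lemma c_end: "coeff_c (Suc (Suc n)) (Suc n) = (4*real (Suc n)+2-2*real (n)) * coeff_c (Suc n) n"
proof -
  have e1: "Suc (Suc (Suc (k+j))) - Suc k = Suc (Suc j)" "Suc (Suc (k+j)) - Suc k = Suc j" "Suc (Suc (k+j)) - k = Suc (Suc j)"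
     "Suc (Suc n) - Suc n = Suc 0" "Suc n - n = Suc 0" "\<And>x::nat. x + 1 = Suc x"
     by auto
  define F :: real where "F = fact (k+j)"
  define F2 :: real where "F2 = fact n"
  define G :: real where "G = fact j"
  define K :: real where "K = fact k"
  define Dj where "Dj = real (odd_dfact j)"
  define Dn where "Dn = real (odd_dfact n)"
  have pos: "F > 0" "F2 > 0" "G > 0" "K > 0" "Dj > 0" "Dn > 0" unfolding F_def F2_def G_def K_def Dj_def Dn_def odd_dfact_def by (auto intro!: prod_pos)
  show ?thesis
    unfolding coeff_c_def e1
    apply (simp only: fact_Suc odd_dfact_Suc power_Suc diff_Suc_1 diff_zero fact_0 e1)
    apply (fold F_def F2_def G_def K_def Dj_def Dn_def)
    using pos apply (simp add: divide_simps del: of_nat_Suc)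
    apply (simp add: algebra_simps)?
    done
qed




lemma hconv: "t > 0 \<Longrightarrow> sqrt (1 + 1/t) = t powr (-1/2) * (1+t) powr (1/2)"
proof -
  assume t: "t > 0"
  have "1 + 1/t = (1+t)/t" using t by (simp add: field_simps)
  then have "sqrt (1 + 1/t) = ((1+t)/t) powr (1/2)" using t by (simp add: powr_half_sqrt)
  also have "\<dots> = (1+t) powr (1/2) / t powr (1/2)" using t by (simp add: powr_divide)
  also have "\<dots> = t powr (-1/2) * (1+t) powr (1/2)" using t by (simp add: powr_minus_divide)
  finally show ?thesis .
qed

lemma pconv:
  assumes t: "t > 0" and ht: "hh = t powr (-1/2) * (1+t) powr (1/2)"
  shows "t powr (1/2 - real p) * (1+t) powr (-1/2 - real q) = 1 / (t^p * (1+t)^q * hh)"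
proof -
  have "t^p * (1+t)^q * hh = t powr (real p + (-1/2)) * (1+t) powr (real q + 1/2)"
  proof -
    have "t powr (real p + (-1/2)) = t powr real p * t powr (-1/2)" by (rule powr_add)
    moreover have "(1+t) powr (real q + 1/2) = (1+t) powr real q * (1+t) powr (1/2)" by (rule powr_add)
    ultimately show ?thesis using t by (simp add: ht powr_realpow mult_ac)
  qed
  moreover have "t powr (1/2 - real p) = inverse (t powr (real p + (-1/2)))"
  proof -
    have "1/2 - real p = -(real p + (-1/2))" by simp
    then show ?thesis by (simp only: powr_minus)
  qed
  moreover have "(1+t) powr (-1/2 - real q) = inverse ((1+t) powr (real q + 1/2))"
  proof -
    have "-1/2 - real q = -(real q + 1/2)" by simp
    then show ?thesis by (simp only: powr_minus)
  qed
  ultimately show ?thesis by (simp add: field_simps)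
qed

lemma sum_alg:
  fixes c :: "nat \<Rightarrow> real"
  shows "(\<Sum>k<m. c k * (real k * t^(k-1))) * t * (1+t) + (\<Sum>k<m. c k * t^k) * (A*(1+t) + B*t)
     = (\<Sum>k<m. c k * ((real k + A) * t^k + (real k + A + B) * t^(k+1)))"
proof -
  have e: "c k * (real k * t^(k-1)) * t * (1+t) = c k * (real k * t^k) * (1+t)" for k by (cases k) auto
  have "(\<Sum>k<m. c k * (real k * t^(k-1))) * t * (1+t) = (\<Sum>k<m. c k * (real k * t^k) * (1+t))"
    unfolding sum_distrib_right e ..
  then have "(\<Sum>k<m. c k * (real k * t^(k-1))) * t * (1+t) + (\<Sum>k<m. c k * t^k) * (A*(1+t) + B*t)
     = (\<Sum>k<m. c k * (real k * t^k) * (1+t) + c k * t^k * (A*(1+t) + B*t))"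
    by (simp only: sum_distrib_right sum.distrib)
  also have "\<dots> = (\<Sum>k<m. c k * ((real k + A) * t^k + (real k + A + B) * t^(k+1)))"
    by (intro sum.cong) (simp_all add: algebra_simps)
  finally show ?thesis .
qed

lemma dsum: "((\<lambda>t. \<Sum>k<m. c k * t^k) has_real_derivative (\<Sum>k<m. c k * (real k * t^(k-1)))) (at t)"
  by (auto intro!: derivative_eq_intros simp: mult_ac)



lemma half_inv: "x > 0 \<Longrightarrow> x powr (-1/2) * x powr (1/2) = (1::real)"
proof -
  assume "x > 0"
  have "x powr (-1/2) * x powr (1/2) = x powr (-1/2 + 1/2)" by (rule powr_add[symmetric])
  also have "\<dots> = 1" using \<open>x > 0\<close> by simp
  finally show ?thesis .
qed

lemma half_shift: "x > 0 \<Longrightarrow> x powr (1/2) = x * x powr (-1/2::real)"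
proof -
  assume "x > 0"
  have "x powr (1 + -1/2) = x powr 1 * x powr (-1/2)" by (rule powr_add)
  then show ?thesis using \<open>x > 0\<close> by simp
qed

lemma cbase: "t > 0 \<Longrightarrow> sqrt (1+1/t) + 1 / sqrt (1+1/t) = (1 + 2*t) * t powr (-1/2) * (1+t) powr (-1/2)"
  proof -
    assume t: "t > 0"
    have t1: "1 + t > 0" using t by simp
    have ha: "t powr (-1/2) * t powr (-1/2) * t = 1"
    proof -
      have "t powr (-1/2) * t powr (-1/2) * t = t powr (-1/2) * (t * t powr (-1/2))" by (simp only: mult_ac)
      also have "\<dots> = t powr (-1/2) * t powr (1/2)" by (simp only: half_shift[OF t])
      also have "\<dots> = 1" by (rule half_inv[OF t])
      finally show ?thesis .
    qed
    have hb: "(1+t) powr (-1/2) * (1+t) powr (-1/2) * (1+t) = 1"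
    proof -
      have "(1+t) powr (-1/2) * (1+t) powr (-1/2) * (1+t) = (1+t) powr (-1/2) * ((1+t) * (1+t) powr (-1/2))" by (simp only: mult_ac)
      also have "\<dots> = (1+t) powr (-1/2) * (1+t) powr (1/2)" by (simp only: half_shift[OF t1])
      also have "\<dots> = 1" by (rule half_inv[OF t1])
      finally show ?thesis .
    qed
    have h: "sqrt (1+1/t) = t powr (-1/2) * (1+t) * (1+t) powr (-1/2)"
      unfolding hconv[OF t] half_shift[OF t1] by (simp only: mult_ac)
    have eq: "t powr (-1/2) * (1+t) * (1+t) powr (-1/2) * (t powr (-1/2) * t * (1+t) powr (-1/2))
       = (t powr (-1/2) * t powr (-1/2) * t) * ((1+t) powr (-1/2) * (1+t) powr (-1/2) * (1+t))"
      by (simp only: mult_ac)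
    have prod: "t powr (-1/2) * (1+t) * (1+t) powr (-1/2) * (t powr (-1/2) * t * (1+t) powr (-1/2)) = 1"
      unfolding eq ha hb by simp
    have "inverse (t powr (-1/2) * (1+t) * (1+t) powr (-1/2)) = t powr (-1/2) * t * (1+t) powr (-1/2)"
      by (rule inverse_unique[OF prod])
    then have "1 / sqrt (1+1/t) = t powr (-1/2) * t * (1+t) powr (-1/2)" unfolding h by (simp only: divide_inverse mult_1_left)
    then show ?thesis unfolding h by algebra
  qed



lemma rec_gen:
  fixes c :: "nat \<Rightarrow> nat \<Rightarrow> real" and A B s s' :: real
  assumes c0: "c (Suc (Suc n)) 0 = -2*(real 0 + A) * c (Suc n) 0"
  and cmid: "\<And>k. k < n \<Longrightarrow> c (Suc(Suc n)) (Suc k) = -2*(real (Suc k) + A) * c (Suc n) (Suc k) + -2*(real k + A + B) * c (Suc n) k"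
  and cend: "c (Suc(Suc n)) (Suc n) = -2*(real n + A + B) * c (Suc n) n"
  and ss: "s' = - s / 2"
  shows "s * ((\<Sum>k<Suc n. c (Suc n) k * (real k * t^(k-1))) * t * (1+t) + (\<Sum>k<Suc n. c (Suc n) k * t^k) * (A*(1+t)+B*t))
     = s' * (\<Sum>k<Suc(Suc n). c (Suc(Suc n)) k * t^k)"
proof -
  have "(\<Sum>k<Suc(Suc n). c (Suc(Suc n)) k * t^k) = (\<Sum>k<Suc n. (-2*(real k + A) * c (Suc n) k) * t^k + (-2*(real k+A+B) * c (Suc n) k) * t^(k+1))"
    by (rule reindex) (use c0 cmid cend in auto)
  also have "\<dots> = -2 * (\<Sum>k<Suc n. c (Suc n) k * ((real k + A) * t^k + (real k + A + B) * t^(k+1)))"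
    by (simp add: sum_distrib_left algebra_simps)
  finally have e: "(\<Sum>k<Suc(Suc n). c (Suc(Suc n)) k * t^k) = -2 * (\<Sum>k<Suc n. c (Suc n) k * ((real k + A) * t^k + (real k + A + B) * t^(k+1)))" .
  show ?thesis by (simp only: sum_alg ss e)
qed

lemma h_fam: "\<forall>t>0. (deriv ^^ i) (\<lambda>t. sqrt (1+1/t)) t =
   (-1)^i/2^i * (if i = 0 then 1 else \<Sum>k<i. coeff_a i k * t^k) * t powr (-real i - 1/2) * (1+t) powr (1/2 - real i)"
proof (rule family[where R' = "\<lambda>i t. if i = 0 then 0 else \<Sum>k<i. coeff_a i k * (real k * t^(k-1))"])
  show "\<And>t. t > 0 \<Longrightarrow> sqrt (1+1/t) = (-1)^0/2^0 * (if 0 = (0::nat) then 1 else \<Sum>k<0. coeff_a 0 k * t^k) * t powr (-real 0 - 1/2) * (1+t) powr (1/2 - real 0)"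
    by (simp add: hconv)
  show "\<And>i t. t > 0 \<Longrightarrow> ((\<lambda>t. if i = 0 then 1 else \<Sum>k<i. coeff_a i k * t^k) has_real_derivative
      (if i = 0 then 0 else \<Sum>k<i. coeff_a i k * (real k * t^(k-1)))) (at t)"
    using dsum by simp
  show "\<And>i. -real (Suc i) - 1/2 = (-real i - 1/2) - 1" by simp
  show "\<And>i. 1/2 - real (Suc i) = (1/2 - real i) - 1" by simp
  fix i and t :: real assume t: "t > 0"
  show "(-1)^i/2^i * ((if i = 0 then 0 else \<Sum>k<i. coeff_a i k * (real k * t^(k-1))) * t * (1+t)
        + (if i = 0 then 1 else \<Sum>k<i. coeff_a i k * t^k) * ((-real i - 1/2) * (1+t) + (1/2 - real i) * t))
     = (-1)^Suc i/2^Suc i * (if Suc i = 0 then 1 else \<Sum>k<Suc i. coeff_a (Suc i) k * t^k)"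
  proof (cases i)
    case 0
    then show ?thesis by (simp add: coeff_a_def odd_dfact_def algebra_simps)
  next
    case (Suc n)
    have "(-1)^i/2^i * ((\<Sum>k<Suc n. coeff_a (Suc n) k * (real k * t^(k-1))) * t * (1+t)
        + (\<Sum>k<Suc n. coeff_a (Suc n) k * t^k) * ((-real (Suc n) - 1/2) * (1+t) + (1/2 - real (Suc n)) * t))
     = (-1)^Suc i/2^Suc i * (\<Sum>k<Suc (Suc n). coeff_a (Suc (Suc n)) k * t^k)"
    proof (rule rec_gen)
      show "coeff_a (Suc (Suc n)) 0 = -2*(real 0 + (-real (Suc n) - 1/2)) * coeff_a (Suc n) 0"
        using a_0[of n] by simp
      show "coeff_a (Suc (Suc n)) (Suc n) = -2*(real n + (-real (Suc n) - 1/2) + (1/2 - real (Suc n))) * coeff_a (Suc n) n"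
        using a_end[of n] by simp
      fix k assume "k < n"
      then obtain j where nj: "n = Suc (k + j)" by (metis add_Suc_right less_iff_Suc_add)
      show "coeff_a (Suc(Suc n)) (Suc k) = -2*(real (Suc k) + (-real (Suc n) - 1/2)) * coeff_a (Suc n) (Suc k) + -2*(real k + (-real (Suc n) - 1/2) + (1/2 - real (Suc n))) * coeff_a (Suc n) k"
        using a_mid[of k j] unfolding nj by (simp add: algebra_simps)
    next
      show "(-1)^Suc i/2^Suc i = - ((-1)^i/2^i) / (2::real)" by simp
    qed
    then show ?thesis using Suc by simp
  qed
qed

lemma b_fam: "\<forall>t>0. (deriv ^^ i) (\<lambda>t. 1 / sqrt (1+1/t)) t =
   (-1)^(i+1)/2^i * (if i = 0 then -1 else \<Sum>k<i. coeff_b i k * t^k) * t powr (1/2 - real i) * (1+t) powr (-1/2 - real i)"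
proof (rule family[where R' = "\<lambda>i t. if i = 0 then 0 else \<Sum>k<i. coeff_b i k * (real k * t^(k-1))"])
  show "\<And>t. t > 0 \<Longrightarrow> 1 / sqrt (1+1/t) = (-1)^(0+1)/2^0 * (if 0 = (0::nat) then -1 else \<Sum>k<0. coeff_b 0 k * t^k) * t powr (1/2 - real 0) * (1+t) powr (-1/2 - real 0)"
  proof -
    fix t :: real assume t: "t > 0"
    have "t powr (-1/2) * t powr (1/2) = 1" "(1+t) powr (-1/2) * (1+t) powr (1/2) = 1"
      using half_inv t by auto
    then show "?thesis t" unfolding hconv[OF t] using t by (simp add: field_simps)
  qed
  show "\<And>i t. t > 0 \<Longrightarrow> ((\<lambda>t. if i = 0 then -1 else \<Sum>k<i. coeff_b i k * t^k) has_real_derivative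
      (if i = 0 then 0 else \<Sum>k<i. coeff_b i k * (real k * t^(k-1)))) (at t)"
    using dsum by simp
  show "\<And>i. 1/2 - real (Suc i) = (1/2 - real i) - 1" by simp
  show "\<And>i. -1/2 - real (Suc i) = (-1/2 - real i) - 1" by simp
  fix i and t :: real assume t: "t > 0"
  show "(-1)^(i+1)/2^i * ((if i = 0 then 0 else \<Sum>k<i. coeff_b i k * (real k * t^(k-1))) * t * (1+t)
        + (if i = 0 then -1 else \<Sum>k<i. coeff_b i k * t^k) * ((1/2 - real i) * (1+t) + (-1/2 - real i) * t))
     = (-1)^(Suc i + 1)/2^Suc i * (if Suc i = 0 then -1 else \<Sum>k<Suc i. coeff_b (Suc i) k * t^k)"
  proof (cases i)
    case 0
    then show ?thesis by (simp add: coeff_b_def odd_dfact_def algebra_simps)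
  next
    case (Suc n)
    have "(-1)^(i+1)/2^i * ((\<Sum>k<Suc n. coeff_b (Suc n) k * (real k * t^(k-1))) * t * (1+t)
        + (\<Sum>k<Suc n. coeff_b (Suc n) k * t^k) * ((1/2 - real (Suc n)) * (1+t) + (-1/2 - real (Suc n)) * t))
     = (-1)^(Suc i + 1)/2^Suc i * (\<Sum>k<Suc (Suc n). coeff_b (Suc (Suc n)) k * t^k)"
    proof (rule rec_gen)
      show "coeff_b (Suc (Suc n)) 0 = -2*(real 0 + (1/2 - real (Suc n))) * coeff_b (Suc n) 0"
        using b_0[of n] by simp
      show "coeff_b (Suc (Suc n)) (Suc n) = -2*(real n + (1/2 - real (Suc n)) + (-1/2 - real (Suc n))) * coeff_b (Suc n) n"
        using b_end[of n] by simp
      fix k assume "k < n"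
      then obtain j where nj: "n = Suc (k + j)" by (metis add_Suc_right less_iff_Suc_add)
      show "coeff_b (Suc(Suc n)) (Suc k) = -2*(real (Suc k) + (1/2 - real (Suc n))) * coeff_b (Suc n) (Suc k) + -2*(real k + (1/2 - real (Suc n)) + (-1/2 - real (Suc n))) * coeff_b (Suc n) k"
        using b_mid[of k j] unfolding nj by (simp add: algebra_simps)
    next
      show "(-1)^(Suc i + 1)/2^Suc i = - ((-1)^(i+1)/2^i) / (2::real)" by simp
    qed
    then show ?thesis using Suc by simp
  qed
qed

lemma c_fam: "\<forall>t>0. (deriv ^^ i) (\<lambda>t. sqrt (1+1/t) + 1 / sqrt (1+1/t)) t =
   (-1)^i/2^i * (if i = 0 then 1 + 2*t else \<Sum>k<i. coeff_c i k * t^k) * t powr (-real i - 1/2) * (1+t) powr (-real i - 1/2)"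
proof (rule family[where R' = "\<lambda>i t. if i = 0 then 2 else \<Sum>k<i. coeff_c i k * (real k * t^(k-1))"])
  show "\<And>t. t > 0 \<Longrightarrow> sqrt (1+1/t) + 1 / sqrt (1+1/t) = (-1)^0/2^0 * (if 0 = (0::nat) then 1 + 2*t else \<Sum>k<0. coeff_c 0 k * t^k) * t powr (-real 0 - 1/2) * (1+t) powr (-real 0 - 1/2)"
    using cbase by simp
  show "\<And>i t. t > 0 \<Longrightarrow> ((\<lambda>t. if i = 0 then 1 + 2*t else \<Sum>k<i. coeff_c i k * t^k) has_real_derivative
      (if i = 0 then 2 else \<Sum>k<i. coeff_c i k * (real k * t^(k-1)))) (at t)"
    using dsum by (auto intro!: derivative_eq_intros)
  show "\<And>i. -real (Suc i) - 1/2 = (-real i - 1/2) - 1" by simp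
  show "\<And>i. -real (Suc i) - 1/2 = (-real i - 1/2) - 1" by simp
  fix i and t :: real assume t: "t > 0"
  show "(-1)^i/2^i * ((if i = 0 then 2 else \<Sum>k<i. coeff_c i k * (real k * t^(k-1))) * t * (1+t)
        + (if i = 0 then 1 + 2*t else \<Sum>k<i. coeff_c i k * t^k) * ((-real i - 1/2) * (1+t) + (-real i - 1/2) * t))
     = (-1)^Suc i/2^Suc i * (if Suc i = 0 then 1 + 2*t else \<Sum>k<Suc i. coeff_c (Suc i) k * t^k)"
  proof (cases i)
    case 0
    then show ?thesis by (simp add: coeff_c_def odd_dfact_def algebra_simps)
  next
    case (Suc n)
    have "(-1)^i/2^i * ((\<Sum>k<Suc n. coeff_c (Suc n) k * (real k * t^(k-1))) * t * (1+t)
        + (\<Sum>k<Suc n. coeff_c (Suc n) k * t^k) * ((-real (Suc n) - 1/2) * (1+t) + (-real (Suc n) - 1/2) * t))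
     = (-1)^Suc i/2^Suc i * (\<Sum>k<Suc (Suc n). coeff_c (Suc (Suc n)) k * t^k)"
    proof (rule rec_gen)
      show "coeff_c (Suc (Suc n)) 0 = -2*(real 0 + (-real (Suc n) - 1/2)) * coeff_c (Suc n) 0"
        using c_0[of n] by simp
      show "coeff_c (Suc (Suc n)) (Suc n) = -2*(real n + (-real (Suc n) - 1/2) + (-real (Suc n) - 1/2)) * coeff_c (Suc n) n"
        using c_end[of n] by simp
      fix k assume "k < n"
      then obtain j where nj: "n = Suc (k + j)" by (metis add_Suc_right less_iff_Suc_add)
      show "coeff_c (Suc(Suc n)) (Suc k) = -2*(real (Suc k) + (-real (Suc n) - 1/2)) * coeff_c (Suc n) (Suc k) + -2*(real k + (-real (Suc n) - 1/2) + (-real (Suc n) - 1/2)) * coeff_c (Suc n) k"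
        using c_mid[of k j] unfolding nj by (simp add: algebra_simps)
    next
      show "(-1)^Suc i/2^Suc i = - ((-1)^i/2^i) / (2::real)" by simp
    qed
    then show ?thesis using Suc by simp
  qed
qed




lemma div_split: "(a::real) / (b * c) * S = a / b * S * (1 / c)"
  by (simp add: divide_inverse inverse_mult_distrib mult_ac)

lemma neg1_sq: "(-1::real)^n * (-1)^n = 1"
  by (induct n) auto

lemma sign_gen: "R \<ge> 0 \<Longrightarrow> t > 0 \<Longrightarrow> (0::real) \<le> (-1)^n * ((-1)^n/2^n * R * t powr a * (1+t) powr b)"
proof -
  assume R: "R \<ge> 0" and t: "t > 0"
  have "(-1)^n * ((-1)^n/2^n * R * t powr a * (1+t) powr b) = ((-1::real)^n * (-1)^n) * (R * t powr a * (1+t) powr b / 2^n)"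
    by (simp add: field_simps)
  also have "\<dots> = R * t powr a * (1+t) powr b / 2^n" by (simp only: neg1_sq mult_1_left)
  finally have e: "(-1)^n * ((-1)^n/2^n * R * t powr a * (1+t) powr b) = R * t powr a * (1+t) powr b / 2^n" .
  show ?thesis unfolding e using R t by simp
qed

lemma fam_diff:
  assumes eq: "\<forall>u>0. g u = s * Q u * u powr a * (1+u) powr b"
    and dQ: "\<And>u. u > 0 \<Longrightarrow> (Q has_real_derivative Q' u) (at u)" and t: "(t::real) > 0"
  shows "g differentiable (at t)"
  using step_deriv[of g s Q a b Q' t] eq dQ t real_differentiable_def by blast

lemma ca_nn: "coeff_a i k \<ge> 0" by (simp add: coeff_a_def)
lemma cb_nn: "coeff_b i k \<ge> 0" by (simp add: coeff_b_def)
lemma cc_nn: "coeff_c i k \<ge> 0" by (simp add: coeff_c_def)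

lemma sum_nn: "(\<And>k. c k \<ge> 0) \<Longrightarrow> (t::real) > 0 \<Longrightarrow> (\<Sum>k<i. c k * t^k) \<ge> 0"
  by (intro sum_nonneg) simp




lemma dRa: "\<And>t. t > 0 \<Longrightarrow> ((\<lambda>t. if i = 0 then 1 else \<Sum>k<i. coeff_a i k * t^k) has_real_derivative
      (if i = 0 then 0 else \<Sum>k<i. coeff_a i k * (real k * t^(k-1)))) (at t)"
  using dsum by simp
lemma dRb: "\<And>t. t > 0 \<Longrightarrow> ((\<lambda>t. if i = 0 then -1 else \<Sum>k<i. coeff_b i k * t^k) has_real_derivative
      (if i = 0 then 0 else \<Sum>k<i. coeff_b i k * (real k * t^(k-1)))) (at t)"
  using dsum by simp
lemma dRc: "\<And>t. t > 0 \<Longrightarrow> ((\<lambda>t. if i = 0 then 1 + 2*t else \<Sum>k<i. coeff_c i k * t^k) has_real_derivative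
      (if i = 0 then 2 else \<Sum>k<i. coeff_c i k * (real k * t^(k-1)))) (at t)"
  using dsum by (auto intro!: derivative_eq_intros)

theorem lemma2p1:
  fixes h H :: "real \<Rightarrow> real"
  assumes h_def: "h = (\<lambda>t. sqrt (1 + 1 / t))"
      and H_def: "H = (\<lambda>t. h t + 1 / h t)"
  shows "(\<forall>i\<ge>1. \<forall>t>0. (deriv ^^ i) h t =
            (-1) ^ i / (2 ^ i * t ^ (i + 1) * (1 + t) ^ (i - 1) * h t)
              * (\<Sum>k<i. coeff_a i k * t ^ k))
       \<and> (\<forall>i\<ge>1. \<forall>t>0. (deriv ^^ i) (\<lambda>x. 1 / h x) t =
            (-1) ^ (i + 1) / (2 ^ i * t ^ i * (1 + t) ^ i * h t)
              * (\<Sum>k<i. coeff_b i k * t ^ k))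
       \<and> (\<forall>i\<ge>1. \<forall>t>0. (deriv ^^ i) H t =
            (-1) ^ i / (2 ^ i * t ^ (i + 1) * (1 + t) ^ i * h t)
              * (\<Sum>k<i. coeff_c i k * t ^ k))
       \<and> completely_monotonic_on {0<..} h
       \<and> completely_monotonic_on {0<..} H
       \<and> bernstein_on {0<..} (\<lambda>t. 1 / h t)"
proof -
  have Hf: "H = (\<lambda>t. sqrt (1+1/t) + 1 / sqrt (1+1/t))" using H_def h_def by simp
  have hi: "(\<lambda>x. 1 / h x) = (\<lambda>t. 1 / sqrt (1+1/t))" using h_def by simp
  have hpos: "h t > 0" if "t > 0" for t using that h_def by (simp add: add_pos_pos)
  have ht: "h t = t powr (-1/2) * (1+t) powr (1/2)" if "t > 0" for t
    using h_def hconv[OF that] by simp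
  have P1: "\<forall>i\<ge>1. \<forall>t>0. (deriv ^^ i) h t =
            (-1) ^ i / (2 ^ i * t ^ (i + 1) * (1 + t) ^ (i - 1) * h t)
              * (\<Sum>k<i. coeff_a i k * t ^ k)"
  proof (intro allI impI)
    fix i :: nat and t :: real assume i: "i \<ge> 1" and t: "t > 0"
    have ex: "t powr (-real i - 1/2) * (1+t) powr (1/2 - real i) = 1/(t^(i+1) * (1+t)^(i-1) * h t)"
    proof -
      have e: "1/2 - real (i+1) = -real i - 1/2" "-1/2 - real (i-1) = 1/2 - real i" using i by (auto simp: of_nat_diff)
      show ?thesis using pconv[OF t ht[OF t], of "i+1" "i-1"] by (simp only: e)
    qed
    have "(deriv ^^ i) h t = (-1)^i/2^i * (if i = 0 then 1 else \<Sum>k<i. coeff_a i k * t^k) * t powr (-real i - 1/2) * (1+t) powr (1/2 - real i)"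
      using h_fam[of i] t unfolding h_def by blast
    also have "\<dots> = (-1)^i/2^i * (\<Sum>k<i. coeff_a i k * t^k) * (t powr (-real i - 1/2) * (1+t) powr (1/2 - real i))"
      using i by (simp add: mult.assoc)
    also have "\<dots> = (-1) ^ i / (2 ^ i * (t ^ (i + 1) * (1 + t) ^ (i - 1) * h t)) * (\<Sum>k<i. coeff_a i k * t ^ k)"
      unfolding ex div_split ..
    finally show "(deriv ^^ i) h t = (-1) ^ i / (2 ^ i * t ^ (i + 1) * (1 + t) ^ (i - 1) * h t) * (\<Sum>k<i. coeff_a i k * t ^ k)"
      by (simp add: mult.assoc)
  qed
  have P2: "\<forall>i\<ge>1. \<forall>t>0. (deriv ^^ i) (\<lambda>x. 1 / h x) t =
            (-1) ^ (i + 1) / (2 ^ i * t ^ i * (1 + t) ^ i * h t)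
              * (\<Sum>k<i. coeff_b i k * t ^ k)"
  proof (intro allI impI)
    fix i :: nat and t :: real assume i: "i \<ge> 1" and t: "t > 0"
    have ex: "t powr (1/2 - real i) * (1+t) powr (-1/2 - real i) = 1/(t^i * (1+t)^i * h t)"
      using pconv[OF t ht[OF t], of "i" "i"] by simp
    have "(deriv ^^ i) (\<lambda>x. 1 / h x) t = (-1)^(i+1)/2^i * (if i = 0 then -1 else \<Sum>k<i. coeff_b i k * t^k) * t powr (1/2 - real i) * (1+t) powr (-1/2 - real i)"
      using b_fam[of i] t unfolding hi by blast
    also have "\<dots> = (-1)^(i+1)/2^i * (\<Sum>k<i. coeff_b i k * t^k) * (t powr (1/2 - real i) * (1+t) powr (-1/2 - real i))"
      using i by (simp add: mult.assoc)
    also have "\<dots> = (-1) ^ (i+1) / (2 ^ i * (t ^ i * (1 + t) ^ i * h t)) * (\<Sum>k<i. coeff_b i k * t ^ k)"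
      unfolding ex div_split ..
    finally show "(deriv ^^ i) (\<lambda>x. 1 / h x) t = (-1) ^ (i + 1) / (2 ^ i * t ^ i * (1 + t) ^ i * h t) * (\<Sum>k<i. coeff_b i k * t ^ k)"
      by (simp add: mult.assoc)
  qed
  have P3: "\<forall>i\<ge>1. \<forall>t>0. (deriv ^^ i) H t =
            (-1) ^ i / (2 ^ i * t ^ (i + 1) * (1 + t) ^ i * h t)
              * (\<Sum>k<i. coeff_c i k * t ^ k)"
  proof (intro allI impI)
    fix i :: nat and t :: real assume i: "i \<ge> 1" and t: "t > 0"
    have ex: "t powr (-real i - 1/2) * (1+t) powr (-real i - 1/2) = 1/(t^(i+1) * (1+t)^i * h t)"
    proof -
      have e: "1/2 - real (i+1) = -real i - 1/2" "-1/2 - real i = -real i - 1/2" by auto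
      show ?thesis using pconv[OF t ht[OF t], of "i+1" "i"] by (simp only: e)
    qed
    have "(deriv ^^ i) H t = (-1)^i/2^i * (if i = 0 then 1 + 2*t else \<Sum>k<i. coeff_c i k * t^k) * t powr (-real i - 1/2) * (1+t) powr (-real i - 1/2)"
      using c_fam[of i] t unfolding Hf by blast
    also have "\<dots> = (-1)^i/2^i * (\<Sum>k<i. coeff_c i k * t^k) * (t powr (-real i - 1/2) * (1+t) powr (-real i - 1/2))"
      using i by (simp add: mult.assoc)
    also have "\<dots> = (-1) ^ i / (2 ^ i * (t ^ (i + 1) * (1 + t) ^ i * h t)) * (\<Sum>k<i. coeff_c i k * t ^ k)"
      unfolding ex div_split ..
    finally show "(deriv ^^ i) H t = (-1) ^ i / (2 ^ i * t ^ (i + 1) * (1 + t) ^ i * h t) * (\<Sum>k<i. coeff_c i k * t ^ k)"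
      by (simp add: mult.assoc)
  qed
  have CM1: "completely_monotonic_on {0<..} h"
    unfolding completely_monotonic_on_def
  proof (intro conjI allI ballI)
    fix n and t :: real assume "t \<in> {0<..}"
    then have t: "t > 0" by simp
    show "(deriv ^^ n) h differentiable (at t)"
      unfolding h_def
      by (rule fam_diff[OF h_fam[of n] dRa t])
    have R: "(if n = 0 then 1 else \<Sum>k<n. coeff_a n k * t^k) \<ge> (0::real)"
      using sum_nn[OF ca_nn t] by simp
    show "(-1)^n * (deriv ^^ n) h t \<ge> 0"
      using h_fam[of n] t sign_gen[OF R t] unfolding h_def by simp
  qed
  have CM2: "completely_monotonic_on {0<..} H"
    unfolding completely_monotonic_on_def
  proof (intro conjI allI ballI)
    fix n and t :: real assume "t \<in> {0<..}"
    then have t: "t > 0" by simp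
    show "(deriv ^^ n) H differentiable (at t)"
      unfolding Hf
      by (rule fam_diff[OF c_fam[of n] dRc t])
    have R: "(if n = 0 then 1 + 2*t else \<Sum>k<n. coeff_c n k * t^k) \<ge> (0::real)"
      using sum_nn[OF cc_nn t] t by simp
    show "(-1)^n * (deriv ^^ n) H t \<ge> 0"
      using c_fam[of n] t sign_gen[OF R t] unfolding Hf by simp
  qed
  have BF: "bernstein_on {0<..} (\<lambda>t. 1 / h t)"
    unfolding bernstein_on_def completely_monotonic_on_def
  proof (intro conjI allI ballI)
    fix t :: real assume "t \<in> {0<..}"
    then have "h t > 0" using hpos by simp
    then show "1 / h t \<ge> 0" by simp
  next
    fix n and t :: real assume "t \<in> {0<..}"
    then have t: "t > 0" by simp
    show "(deriv ^^ n) (\<lambda>t. 1 / h t) differentiable (at t)"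
      unfolding hi
      by (rule fam_diff[OF b_fam[of n] dRb t])
  next
    fix n and t :: real assume "t \<in> {0<..}"
    then have t: "t > 0" by simp
    have e: "(deriv ^^ n) (deriv (\<lambda>t. 1 / h t)) = (deriv ^^ Suc n) (\<lambda>t. 1 / h t)"
      by (simp only: funpow_Suc_right o_def)
    show "(deriv ^^ n) (deriv (\<lambda>t. 1 / h t)) differentiable (at t)"
      unfolding e unfolding hi
      by (rule fam_diff[OF b_fam[of "Suc n"] dRb t])
  next
    fix n and t :: real assume "t \<in> {0<..}"
    then have t: "t > 0" by simp
    have e: "(deriv ^^ n) (deriv (\<lambda>t. 1 / h t)) = (deriv ^^ Suc n) (\<lambda>t. 1 / h t)"
      by (simp only: funpow_Suc_right o_def)
    have R: "(\<Sum>k<Suc n. coeff_b (Suc n) k * t^k) \<ge> (0::real)"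
      by (rule sum_nn[OF cb_nn t])
    have sg: "(-1::real)^(Suc n + 1) = (-1)^n" by simp
    show "(-1)^n * (deriv ^^ n) (deriv (\<lambda>t. 1 / h t)) t \<ge> 0"
      unfolding e unfolding hi using b_fam[of "Suc n"] t sign_gen[OF R t, of n "1/2 - real (Suc n)" "-1/2 - real (Suc n)"]
      by (simp only: sg) simp
  qed
  show ?thesis using P1 P2 P3 CM1 CM2 BF by blast
qed


end
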